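(* Let $n=p_1^{m_1}\cdots p_k^{m_k}$ be neither prime nor the square of a prime, and let $T=\prod_{i=1}^k(m_i+1)-2$ be the number of vertices of $\mathcal E_{\mathbb Z_n}$. Then $b(\mathcal E_{\mathbb Z_n})\le T$, with equality if and only if one of the following holds: (i) $k=1$ and $m_1>2$; (ii) $k=2$ and $m_1=m_2=1$; (iii) $k\ge2$ and $m_i>1$ for at least one $i$.
   Context: Primes $p_1<\dots<p_k$, positive integers $m_i$. The essential ideal graph $\mathcal E_{\mathbb Z_n}$ has vertices the nonzero proper ideals of $\mathbb Z_n$, with distinct $I,K$ adjacent iff $I+K$ is essential (meets every nonzero ideal nontrivially). For a graph $\Gamma$, $b(\Gamma)$ denotes the largest eigenvalue of its Laplacian matrix $D-A$. *)

theory Defs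
  imports Complex_Main "HOL-Number_Theory.Residues" "HOL-Algebra.Ideal"
begin

definition essential_ideal :: "('a, 'b) ring_scheme \<Rightarrow> 'a set \<Rightarrow> bool" where
  "essential_ideal R J \<longleftrightarrow> ideal J R \<and>
     (\<forall>L. ideal L R \<and> L \<noteq> {\<zero>\<^bsub>R\<^esub>} \<longrightarrow> J \<inter> L \<noteq> {\<zero>\<^bsub>R\<^esub>})"

definition eig_vertices :: "('a, 'b) ring_scheme \<Rightarrow> 'a set set" where
  "eig_vertices R = {I. ideal I R \<and> I \<noteq> {\<zero>\<^bsub>R\<^esub>} \<and> I \<noteq> carrier R}"

definition eig_adj :: "('a, 'b) ring_scheme \<Rightarrow> 'a set \<Rightarrow> 'a set \<Rightarrow> bool" where
  "eig_adj R I K \<longleftrightarrow> I \<noteq> K \<and> essential_ideal R (I <+>\<^bsub>R\<^esub> K)"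

definition laplacian :: "'v set \<Rightarrow> ('v \<Rightarrow> 'v \<Rightarrow> bool) \<Rightarrow> 'v \<Rightarrow> 'v \<Rightarrow> real" where
  "laplacian V E u w =
     (if u = w then real (card {x\<in>V. E u x}) else 0) - (if E u w then 1 else 0)"

definition mat_eigenvalue :: "'v set \<Rightarrow> ('v \<Rightarrow> 'v \<Rightarrow> real) \<Rightarrow> real \<Rightarrow> bool" where
  "mat_eigenvalue V M c \<longleftrightarrow>
     (\<exists>x :: 'v \<Rightarrow> real. (\<exists>v\<in>V. x v \<noteq> 0) \<and>
        (\<forall>u\<in>V. (\<Sum>w\<in>V. M u w * x w) = c * x u))"

definition lap_max_eig :: "'v set \<Rightarrow> ('v \<Rightarrow> 'v \<Rightarrow> bool) \<Rightarrow> real" where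
  "lap_max_eig V E = Max {c. mat_eigenvalue V (laplacian V E) c}"

end

theory Submission
  imports Defs "Jordan_Normal_Form.Char_Poly"
begin


lemma eig_finite:
  assumes fin: "finite V"
  shows "finite {c::real. mat_eigenvalue V M c}"
proof -
  obtain f where f: "bij_betw f {0..<card V} V" using ex_bij_betw_nat_finite[OF fin] by blast
  define N where "N = card V"
  define A :: "real mat" where "A = mat N N (\<lambda>(i,j). M (f i) (f j))"
  have A: "A \<in> carrier_mat N N" unfolding A_def by simp
  have "{c. mat_eigenvalue V M c} \<subseteq> {c. poly (char_poly A) c = 0}"
  proof
    fix c assume "c \<in> {c. mat_eigenvalue V M c}"
    then obtain x where x0: "\<exists>v\<in>V. x v \<noteq> 0" and ev: "\<forall>u\<in>V. (\<Sum>w\<in>V. M u w * x w) = c * x u"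
      unfolding mat_eigenvalue_def by blast
    define v where "v = vec N (\<lambda>i. x (f i))"
    have vc: "v \<in> carrier_vec N" unfolding v_def by simp
    have v0: "v \<noteq> 0\<^sub>v N"
    proof
      assume "v = 0\<^sub>v N"
      from x0 obtain u where u: "u \<in> V" "x u \<noteq> 0" by blast
      then obtain i where i: "i < N" "f i = u" using f unfolding N_def bij_betw_def by force
      have "v $ i = 0" using \<open>v = 0\<^sub>v N\<close> i by simp
      then show False using i u unfolding v_def by simp
    qed
    have "A *\<^sub>v v = c \<cdot>\<^sub>v v"
    proof (rule eq_vecI)
      fix i assume i: "i < dim_vec (c \<cdot>\<^sub>v v)"
      then have iN: "i < N" unfolding v_def by simp
      have fi: "f i \<in> V" using f iN unfolding N_def bij_betw_def by auto
      have "(A *\<^sub>v v) $ i = (\<Sum>j<N. M (f i) (f j) * x (f j))"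
        using iN unfolding A_def v_def by (simp add: mult_mat_vec_def scalar_prod_def lessThan_atLeast0)
      also have "\<dots> = (\<Sum>w\<in>V. M (f i) w * x w)"
        using sum.reindex_bij_betw[OF f, of "\<lambda>w. M (f i) w * x w"] unfolding N_def
        by (simp add: lessThan_atLeast0)
      also have "\<dots> = c * x (f i)" using ev fi by blast
      finally show "(A *\<^sub>v v) $ i = (c \<cdot>\<^sub>v v) $ i" using iN unfolding v_def by simp
    qed (simp add: A_def v_def)
    then have "eigenvalue A c" unfolding eigenvalue_def eigenvector_def using vc v0 A by auto
    then show "c \<in> {c. poly (char_poly A) c = 0}" using eigenvalue_root_char_poly[OF A] by simp
  qed
  moreover have "char_poly A \<noteq> 0" using degree_monic_char_poly[OF A] by auto
  ultimately show ?thesis using poly_roots_finite finite_subset by blast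
qed


lemma L_expand:
  assumes fin: "finite V" and irr: "\<forall>u\<in>V. \<not> E u u" and u: "u \<in> V"
  shows "(\<Sum>w\<in>V. laplacian V E u w * x w) =
     real (card V) * x u - (\<Sum>w\<in>V. x w) + (\<Sum>w\<in>{w\<in>V. w \<noteq> u \<and> \<not> E u w}. x w - x u)"
proof -
  define Nb where "Nb = {w\<in>V. E u w}"
  define C where "C = {w\<in>V. w \<noteq> u \<and> \<not> E u w}"
  have split: "V = insert u (Nb \<union> C)" and disj: "u \<notin> Nb \<union> C" "Nb \<inter> C = {}"
    using u irr unfolding Nb_def C_def by auto
  have fN: "finite Nb" "finite C" using fin unfolding Nb_def C_def by auto
  have cardV: "card V = 1 + card Nb + card C"
    using split disj fN by (simp add: card_Un_disjoint)
  have sV: "(\<Sum>w\<in>V. x w) = x u + (\<Sum>w\<in>Nb. x w) + (\<Sum>w\<in>C. x w)"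
    using split disj fN by (simp add: sum.union_disjoint)
  have "(\<Sum>w\<in>V. laplacian V E u w * x w) = (\<Sum>w\<in>V. (if u = w then real (card Nb) * x w else 0) - (if E u w then x w else 0))"
    unfolding laplacian_def Nb_def by (intro sum.cong) (auto simp: algebra_simps)
  also have "\<dots> = real (card Nb) * x u - (\<Sum>w\<in>Nb. x w)"
    using fin u by (simp add: sum_subtractf Nb_def sum.If_cases Int_def)
  also have "\<dots> = real (card V) * x u - (\<Sum>w\<in>V. x w) + (\<Sum>w\<in>C. x w - x u)"
    using cardV sV by (simp add: sum_subtractf algebra_simps)
  finally show ?thesis unfolding C_def .
qed

lemma swap_antisym:
  fixes f :: "'v \<Rightarrow> 'v \<Rightarrow> real"
  assumes fin: "finite V" and symR: "\<forall>u\<in>V. \<forall>w\<in>V. R u w \<longrightarrow> R w u"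
  shows "(\<Sum>u\<in>V. \<Sum>w\<in>{w\<in>V. R u w}. f u w) = (\<Sum>u\<in>V. \<Sum>w\<in>{w\<in>V. R u w}. f w u)"
proof -
  have "(\<Sum>u\<in>V. \<Sum>w\<in>{w\<in>V. R u w}. f u w) = (\<Sum>u\<in>V. \<Sum>w\<in>V. if R u w then f u w else 0)"
    using fin by (simp add: sum.If_cases Int_def)
  also have "\<dots> = (\<Sum>w\<in>V. \<Sum>u\<in>V. if R u w then f u w else 0)" by (rule sum.swap)
  also have "\<dots> = (\<Sum>w\<in>V. \<Sum>u\<in>V. if R w u then f u w else 0)"
    using symR by (intro sum.cong refl) auto
  also have "\<dots> = (\<Sum>u\<in>V. \<Sum>w\<in>{w\<in>V. R u w}. f w u)"
    using fin by (simp add: sum.If_cases Int_def)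
  finally show ?thesis .
qed

lemma eig_le:
  assumes fin: "finite V" and irr: "\<forall>u\<in>V. \<not> E u u"
    and sym: "\<forall>u\<in>V. \<forall>w\<in>V. E u w \<longrightarrow> E w u"
    and ev: "mat_eigenvalue V (laplacian V E) c"
  shows "c \<le> real (card V)"
proof -
  obtain x where x0: "\<exists>v\<in>V. x v \<noteq> 0" and e: "\<forall>u\<in>V. (\<Sum>w\<in>V. laplacian V E u w * x w) = c * x u"
    using ev unfolding mat_eigenvalue_def by blast
  define R where "R = (\<lambda>u w. w \<noteq> u \<and> \<not> E u w)"
  have symR: "\<forall>u\<in>V. \<forall>w\<in>V. R u w \<longrightarrow> R w u" using sym unfolding R_def by auto
  define s where "s = (\<Sum>w\<in>V. x w)"
  define N where "N = real (card V)"
  have key: "(N - c) * x u = s - (\<Sum>w\<in>{w\<in>V. R u w}. x w - x u)" if u: "u \<in> V" for u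
    using L_expand[of V E u x, OF fin irr u] e u unfolding R_def s_def N_def by (simp add: algebra_simps)
  define Q where "Q = (\<Sum>u\<in>V. \<Sum>w\<in>{w\<in>V. R u w}. (x w - x u) * x u)"
  have "Q = (\<Sum>u\<in>V. \<Sum>w\<in>{w\<in>V. R u w}. (x u - x w) * x w)"
    unfolding Q_def by (rule swap_antisym[OF fin symR])
  then have "2 * Q = (\<Sum>u\<in>V. \<Sum>w\<in>{w\<in>V. R u w}. (x w - x u) * x u + (x u - x w) * x w)"
    unfolding Q_def by (simp add: sum.distrib)
  also have "\<dots> = (\<Sum>u\<in>V. \<Sum>w\<in>{w\<in>V. R u w}. - ((x w - x u)^2))"
    by (intro sum.cong refl) (simp add: power2_eq_square algebra_simps)
  also have "\<dots> \<le> 0" by (intro sum_nonpos) simp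
  finally have Q0: "Q \<le> 0" by simp
  have "(N - c) * (\<Sum>u\<in>V. (x u)^2) = (\<Sum>u\<in>V. ((N - c) * x u) * x u)"
    by (simp add: sum_distrib_left power2_eq_square algebra_simps)
  also have "\<dots> = (\<Sum>u\<in>V. s * x u - (\<Sum>w\<in>{w\<in>V. R u w}. x w - x u) * x u)"
  proof (intro sum.cong refl)
    fix u assume "u \<in> V"
    then show "(N - c) * x u * x u = s * x u - (\<Sum>w\<in>{w\<in>V. R u w}. x w - x u) * x u"
      using key[of u] by (simp add: left_diff_distrib)
  qed
  also have "\<dots> = (\<Sum>u\<in>V. s * x u) - (\<Sum>u\<in>V. (\<Sum>w\<in>{w\<in>V. R u w}. x w - x u) * x u)"
    by (rule sum_subtractf)
  also have "\<dots> = s * s - Q"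
    unfolding Q_def by (simp add: sum_distrib_right s_def[symmetric] sum_distrib_left[symmetric])
  finally have eq: "(N - c) * (\<Sum>u\<in>V. (x u)^2) = s * s - Q" .
  have "s * s - Q \<ge> 0" using Q0 zero_le_square[of s] by linarith
  moreover have pos: "(\<Sum>u\<in>V. (x u)^2) > 0"
  proof -
    obtain v where v: "v \<in> V" "x v \<noteq> 0" using x0 by blast
    have "(x v)^2 \<le> (\<Sum>u\<in>V. (x u)^2)" using member_le_sum[OF v(1), of "\<lambda>u. (x u)^2"] fin by simp
    moreover have "(x v)^2 > 0" using v by simp
    ultimately show ?thesis by linarith
  qed
  ultimately have "(N - c) * (\<Sum>u\<in>V. (x u)^2) \<ge> 0" using eq by simp
  then have "N - c \<ge> 0" using pos by (simp add: zero_le_mult_iff)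
  then show ?thesis unfolding N_def by simp
qed


lemma eig_zero:
  assumes fin: "finite V" and irr: "\<forall>u\<in>V. \<not> E u u" and ne: "V \<noteq> {}"
  shows "mat_eigenvalue V (laplacian V E) 0"
  unfolding mat_eigenvalue_def
proof (intro exI[of _ "\<lambda>_. 1"] conjI ballI)
  show "\<exists>v\<in>V. (1::real) \<noteq> 0" using ne by auto
  fix u assume u: "u \<in> V"
  show "(\<Sum>w\<in>V. laplacian V E u w * 1) = 0 * 1"
    using L_expand[of V E u "\<lambda>_. 1", OF fin irr u] fin by simp
qed

lemma eig_dom:
  assumes fin: "finite V" and irr: "\<forall>u\<in>V. \<not> E u u"
    and sym: "\<forall>u\<in>V. \<forall>w\<in>V. E u w \<longrightarrow> E w u"
    and v: "v \<in> V" and w: "w \<in> V" "w \<noteq> v" and dom: "\<forall>u\<in>V. u \<noteq> v \<longrightarrow> E v u"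
  shows "mat_eigenvalue V (laplacian V E) (real (card V))"
proof -
  define N where "N = real (card V)"
  define x where "x = (\<lambda>u. if u = v then N - 1 else (-1::real))"
  have cV: "card V = Suc (card (V - {v}))" using fin v by (metis card_Suc_Diff1)
  have s: "(\<Sum>u\<in>V. x u) = 0"
  proof -
    have "(\<Sum>u\<in>V. x u) = x v + (\<Sum>u\<in>V - {v}. x u)" using fin v by (simp add: sum.remove)
    also have "(\<Sum>u\<in>V - {v}. x u) = (\<Sum>u\<in>V - {v}. -1)" by (intro sum.cong) (auto simp: x_def)
    finally show ?thesis using cV unfolding x_def N_def by simp
  qed
  have "card V \<ge> 2"
  proof -
    have "{v, w} \<subseteq> V" using v w by auto
    then have "card {v, w} \<le> card V" using fin by (rule card_mono[rotated])
    then show ?thesis using w by simp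
  qed
  then have xv: "x v \<noteq> 0" unfolding x_def N_def by simp
  show ?thesis unfolding mat_eigenvalue_def
  proof (intro exI[of _ x] conjI ballI)
    show "\<exists>v\<in>V. x v \<noteq> 0" using xv v by blast
    fix u assume u: "u \<in> V"
    have C: "(\<Sum>w\<in>{w\<in>V. w \<noteq> u \<and> \<not> E u w}. x w - x u) = 0"
    proof (cases "u = v")
      case True
      then have emp: "{w\<in>V. w \<noteq> u \<and> \<not> E u w} = {}" using dom by auto
      show ?thesis by (simp only: emp sum.empty)
    next
      case False
      then have "E u v" using sym dom u v by blast
      then show ?thesis using False by (intro sum.neutral) (auto simp: x_def)
    qed
    show "(\<Sum>w\<in>V. laplacian V E u w * x w) = real (card V) * x u"
      using L_expand[of V E u x, OF fin irr u] C s by simp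
  qed
qed

lemma eig_not_full:
  assumes fin: "finite V" and irr: "\<forall>u\<in>V. \<not> E u u"
    and sym: "\<forall>u\<in>V. \<forall>w\<in>V. E u w \<longrightarrow> E w u"
    and diam: "\<forall>u\<in>V. \<forall>w\<in>V. u \<noteq> w \<longrightarrow>
        (\<exists>y\<in>V. y \<noteq> u \<and> \<not> E u y \<and> (w = y \<or> (w \<noteq> y \<and> \<not> E y w)))"
  shows "\<not> mat_eigenvalue V (laplacian V E) (real (card V))"
proof
  assume "mat_eigenvalue V (laplacian V E) (real (card V))"
  then obtain x where x0: "\<exists>v\<in>V. x v \<noteq> 0"
    and e: "\<forall>u\<in>V. (\<Sum>w\<in>V. laplacian V E u w * x w) = real (card V) * x u"
    unfolding mat_eigenvalue_def by blast
  define R where "R = (\<lambda>u w. w \<noteq> u \<and> \<not> E u w)"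
  have symR: "\<forall>u\<in>V. \<forall>w\<in>V. R u w \<longrightarrow> R w u" using sym unfolding R_def by auto
  define s where "s = (\<Sum>w\<in>V. x w)"
  have key: "(\<Sum>w\<in>{w\<in>V. R u w}. x w - x u) = s" if u: "u \<in> V" for u
    using L_expand[of V E u x, OF fin irr u] e u unfolding R_def s_def by simp
  have ne: "V \<noteq> {}" using x0 by auto
  have "(\<Sum>u\<in>V. \<Sum>w\<in>{w\<in>V. R u w}. x w - x u) = (\<Sum>u\<in>V. \<Sum>w\<in>{w\<in>V. R u w}. x u - x w)"
    by (rule swap_antisym[OF fin symR])
  also have "\<dots> = - (\<Sum>u\<in>V. \<Sum>w\<in>{w\<in>V. R u w}. x w - x u)"
    by (simp add: sum_negf[symmetric])
  finally have z: "(\<Sum>u\<in>V. \<Sum>w\<in>{w\<in>V. R u w}. x w - x u) = 0" by simp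
  have "(\<Sum>u\<in>V. \<Sum>w\<in>{w\<in>V. R u w}. x w - x u) = (\<Sum>u\<in>V. s)" using key by simp
  then have "real (card V) * s = 0" using z by simp
  moreover have "card V > 0" using fin ne by (simp add: card_gt_0_iff)
  ultimately have s0: "s = 0" by simp
  define M where "M = Max (x ` V)"
  have xle: "x u \<le> M" if "u \<in> V" for u unfolding M_def using fin that by simp
  obtain u0 where u0: "u0 \<in> V" "x u0 = M" proof -
    have "M \<in> x ` V" unfolding M_def using Max_in[of "x ` V"] fin ne by auto
    then show ?thesis using that by auto
  qed
  have maxprop: "\<forall>w\<in>{w\<in>V. R u w}. x w = M" if u: "u \<in> V" "x u = M" for u
  proof -
    have "(\<Sum>w\<in>{w\<in>V. R u w}. x w - x u) = 0" using key[OF u(1)] s0 by simp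
    then have "(\<Sum>w\<in>{w\<in>V. R u w}. x u - x w) = 0" by (simp add: sum_subtractf)
    moreover have "\<forall>w\<in>{w\<in>V. R u w}. x u - x w \<ge> 0" using xle u by auto
    ultimately have "\<forall>w\<in>{w\<in>V. R u w}. x u - x w = 0"
      using sum_nonneg_eq_0_iff[of "{w\<in>V. R u w}" "\<lambda>w. x u - x w"] fin by auto
    then show ?thesis using u by auto
  qed
  have allM: "x w = M" if w: "w \<in> V" for w
  proof (cases "w = u0")
    case True then show ?thesis using u0 by simp
  next
    case False
    then obtain y where y: "y \<in> V" "y \<noteq> u0" "\<not> E u0 y" "w = y \<or> (w \<noteq> y \<and> \<not> E y w)"
      using diam u0 w by metis
    have "x y = M" using maxprop[OF u0] y unfolding R_def by auto
    then show ?thesis using maxprop[OF y(1)] y w unfolding R_def by auto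
  qed
  have "s = real (card V) * M" unfolding s_def using allM by simp
  then have "M = 0" using s0 \<open>card V > 0\<close> by simp
  then show False using x0 allM by auto
qed

lemma lap_max_facts:
  assumes fin: "finite V" and irr: "\<forall>u\<in>V. \<not> E u u"
    and sym: "\<forall>u\<in>V. \<forall>w\<in>V. E u w \<longrightarrow> E w u" and ne: "V \<noteq> {}"
  shows "lap_max_eig V E \<le> real (card V)"
    and "lap_max_eig V E = real (card V) \<longleftrightarrow> mat_eigenvalue V (laplacian V E) (real (card V))"
proof -
  let ?S = "{c. mat_eigenvalue V (laplacian V E) c}"
  have fS: "finite ?S" by (rule eig_finite[OF fin])
  have neS: "?S \<noteq> {}" using eig_zero[of V E, OF fin irr ne] by blast
  have le: "\<forall>c\<in>?S. c \<le> real (card V)" using eig_le[of V E, OF fin irr sym] by blast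
  have inS: "lap_max_eig V E \<in> ?S" unfolding lap_max_eig_def using Max_in[OF fS neS] .
  show "lap_max_eig V E \<le> real (card V)" using le inS by blast
  show "lap_max_eig V E = real (card V) \<longleftrightarrow> mat_eigenvalue V (laplacian V E) (real (card V))"
  proof
    assume "lap_max_eig V E = real (card V)" then show "mat_eigenvalue V (laplacian V E) (real (card V))"
      using inS by simp
  next
    assume "mat_eigenvalue V (laplacian V E) (real (card V))"
    then have "real (card V) \<le> lap_max_eig V E" unfolding lap_max_eig_def using Max_ge[OF fS] by blast
    then show "lap_max_eig V E = real (card V)" using le inS by fastforce
  qed
qed


definition dI :: "int \<Rightarrow> int \<Rightarrow> int set" where
  "dI m d = {x\<in>{0..m-1}. d dvd x}"

context residues
begin

lemma dI_ideal:
  assumes d: "d > 0" "d dvd m"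
  shows "ideal (dI m d) R"
proof -
  have a: "d mod m \<in> carrier R" by simp
  have "PIdl (d mod m) = dI m d"
  proof
    show "PIdl (d mod m) \<subseteq> dI m d"
    proof
      fix y assume "y \<in> PIdl (d mod m)"
      then obtain x where x: "x \<in> carrier R" "y = x \<otimes> (d mod m)" unfolding cgenideal_def by blast
      have "y = (x * d) mod m" using x by (simp add: res_mult_eq mod_simps)
      moreover have "d dvd (x * d) mod m" using d by (simp add: dvd_mod)
      moreover have "(x*d) mod m \<in> {0..m-1}" using m_gt_one by auto
      ultimately show "y \<in> dI m d" unfolding dI_def by simp
    qed
  next
    show "dI m d \<subseteq> PIdl (d mod m)"
    proof
      fix y assume "y \<in> dI m d"
      then obtain t where y: "y \<in> {0..m-1}" "y = t * d" proof -
        have "y \<in> {0..m-1}" "d dvd y" using \<open>y \<in> dI m d\<close> unfolding dI_def by auto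
        then show ?thesis using that by (metis dvdE mult.commute)
      qed
      have "y = (t mod m) \<otimes> (d mod m)" using y by (simp add: res_mult_eq mod_simps)
      moreover have "t mod m \<in> carrier R" by simp
      ultimately show "y \<in> PIdl (d mod m)" unfolding cgenideal_def by blast
    qed
  qed
  then show ?thesis using cring.cgenideal_ideal[OF cring a] by simp
qed

lemma ideal_dI:
  assumes I: "ideal I R"
  shows "\<exists>d>0. d dvd m \<and> I = dI m d"
proof (cases "I = {0}")
  case True
  have "dI m m = {0}" unfolding dI_def using m_gt_one zdvd_imp_le by fastforce
  then show ?thesis using True m_gt_one by (intro exI[of _ m]) auto
next
  case False
  interpret ideal I R by (rule I)
  have Ic: "I \<subseteq> {0..m-1}" using a_subset res_carrier_eq by simp
  have "0 \<in> I" using zero_closed res_zero_eq by simp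
  with False obtain a where a: "a \<in> I" "a \<noteq> 0" by blast
  then have apos: "a > 0" using Ic by force
  define d0 where "d0 = (LEAST k::nat. int k \<in> I \<and> k > 0)"
  define d where "d = int d0"
  have d0I: "int d0 \<in> I \<and> d0 > 0" unfolding d0_def
    by (rule LeastI_ex, rule exI[of _ "nat a"], use a apos in simp)
  then have dI': "d \<in> I \<and> d > 0" unfolding d_def by simp
  have dmin: "d \<le> x" if "x \<in> I" "x > 0" for x
  proof -
    have "d0 \<le> nat x" unfolding d0_def by (rule Least_le, use that in simp)
    then show ?thesis unfolding d_def using that by simp
  qed
  have dltm: "d < m" using dI' Ic by force
  have multI: "(t * d) mod m \<in> I" for t
  proof -
    have "(t mod m) \<otimes> d \<in> I" using I_l_closed dI' by simp
    then show ?thesis by (simp add: res_mult_eq mod_simps)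
  qed
  have negI: "(- y) mod m \<in> I" if "y \<in> I" for y
    using a_inv_closed[OF that] Ic that by (simp add: res_neg_eq)
  have modI: "(x - t * d) mod m \<in> I" if x: "x \<in> I" for x t
  proof -
    have "x \<oplus> ((- (t*d)) mod m) \<in> I" using a_closed[OF x negI[OF multI[of t]]] by (simp add: mod_simps)
    then show ?thesis by (simp add: res_add_eq mod_simps)
  qed
  have dvdI: "d dvd x" if x: "x \<in> I" for x
  proof -
    have "(x - (x div d) * d) mod m \<in> I" by (rule modI[OF x])
    moreover have "x - (x div d) * d = x mod d" by (simp add: minus_div_mult_eq_mod)
    moreover have "0 \<le> x mod d" "x mod d < d" using dI' by auto
    ultimately have "x mod d \<in> I" using dltm by simp
    then have "x mod d = 0" using dmin \<open>x mod d < d\<close> \<open>0 \<le> x mod d\<close> by force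
    then show ?thesis by auto
  qed
  have ddvd: "d dvd m"
  proof -
    have "(0 - (- (m div d)) * d) mod m \<in> I" by (rule modI[OF \<open>0 \<in> I\<close>])
    moreover have "(0 - (- (m div d)) * d) mod m = (m - m mod d) mod m"
      by (simp add: minus_mod_eq_div_mult)
    moreover have "(m - m mod d) mod m = (- (m mod d)) mod m" by (simp add: mod_simps)
    ultimately have "(- (m mod d)) mod m \<in> I" by simp
    then have "(- ((- (m mod d)) mod m)) mod m \<in> I" by (rule negI)
    then have "(m mod d) mod m \<in> I" by (simp add: mod_minus_eq)
    moreover have "0 \<le> m mod d" "m mod d < d" using dI' by auto
    ultimately have "m mod d \<in> I" using dltm by simp
    then have "m mod d = 0" using dmin \<open>m mod d < d\<close> \<open>0 \<le> m mod d\<close> by force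
    then show ?thesis by auto
  qed
  have "I = dI m d"
  proof
    show "I \<subseteq> dI m d" using Ic dvdI unfolding dI_def by auto
  next
    show "dI m d \<subseteq> I"
    proof
      fix y assume "y \<in> dI m d"
      then obtain t where y: "y \<in> {0..m-1}" "y = t * d" proof -
        have "y \<in> {0..m-1}" "d dvd y" using \<open>y \<in> dI m d\<close> unfolding dI_def by auto
        then show ?thesis using that by (metis dvdE mult.commute)
      qed
      then have "y = (t * d) mod m" by simp
      then show "y \<in> I" using multI by simp
    qed
  qed
  then show ?thesis using dI' ddvd by blast
qed

end


definition essd :: "int \<Rightarrow> int \<Rightarrow> bool" where
  "essd m g \<longleftrightarrow> (\<forall>e>0. e dvd m \<and> e \<noteq> m \<longrightarrow> lcm g e \<noteq> m)"

context residues
begin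

lemma dI_sub:
  assumes d: "d > 0" "d dvd m" and e: "e > 0" "e dvd m"
  shows "dI m d \<subseteq> dI m e \<longleftrightarrow> e dvd d"
proof
  assume sub: "dI m d \<subseteq> dI m e"
  have "d \<le> m" using d m_gt_one zdvd_imp_le by auto
  show "e dvd d"
  proof (cases "d = m")
    case True then show ?thesis using e by simp
  next
    case False
    then have "d \<in> dI m d" using \<open>d \<le> m\<close> d unfolding dI_def by auto
    then show ?thesis using sub unfolding dI_def by auto
  qed
next
  assume "e dvd d" then show "dI m d \<subseteq> dI m e" unfolding dI_def using dvd_trans by blast
qed

lemma dI_inj:
  assumes d: "d > 0" "d dvd m" and e: "e > 0" "e dvd m" and eq: "dI m d = dI m e"
  shows "d = e"
  using dI_sub[OF d e] dI_sub[OF e d] eq d e by (simp add: zdvd_antisym_nonneg)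

lemma dI_m: "dI m m = {0}" unfolding dI_def using m_gt_one zdvd_imp_le by fastforce

lemma dI_one: "dI m 1 = carrier R" unfolding dI_def res_carrier_eq by auto

lemma dI_zero_iff:
  assumes d: "d > 0" "d dvd m" shows "dI m d = {\<zero>} \<longleftrightarrow> d = m"
  using dI_inj[OF d, of m] dI_m m_gt_one res_zero_eq by auto

lemma dI_carrier_iff:
  assumes d: "d > 0" "d dvd m" shows "dI m d = carrier R \<longleftrightarrow> d = 1"
  using dI_inj[OF d, of 1] dI_one m_gt_one by auto

lemma dI_inter: "dI m d \<inter> dI m e = dI m (lcm d e)"
  unfolding dI_def by auto

lemma dI_add:
  assumes d: "d > 0" "d dvd m" and e: "e > 0" "e dvd m"
  shows "dI m d <+>\<^bsub>R\<^esub> dI m e = dI m (gcd d e)"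
proof -
  interpret cring R by (rule cring)
  have Id: "ideal (dI m d) R" "ideal (dI m e) R" using dI_ideal d e by auto
  have g: "gcd d e > 0" "gcd d e dvd m" using d e by auto
  have Ig: "ideal (dI m (gcd d e)) R" using dI_ideal[OF g] .
  have S: "ideal (dI m d <+>\<^bsub>R\<^esub> dI m e) R" by (rule add_ideals[OF Id])
  obtain g' where g': "g' > 0" "g' dvd m" "dI m d <+>\<^bsub>R\<^esub> dI m e = dI m g'"
    using ideal_dI[OF S] by blast
  have "dI m d \<subseteq> dI m d <+>\<^bsub>R\<^esub> dI m e" "dI m e \<subseteq> dI m d <+>\<^bsub>R\<^esub> dI m e"
    using union_genideal[OF Id] genideal_self[of "dI m d \<union> dI m e"] Id
    by (auto dest: ideal.Icarr)
  then have "g' dvd d" "g' dvd e" using g' dI_sub[OF d g'(1,2)] dI_sub[OF e g'(1,2)] by auto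
  then have "g' dvd gcd d e" by simp
  then have sub1: "dI m (gcd d e) \<subseteq> dI m g'" using dI_sub[OF g g'(1,2)] by simp
  have "dI m d \<union> dI m e \<subseteq> dI m (gcd d e)" unfolding dI_def by auto
  then have "Idl (dI m d \<union> dI m e) \<subseteq> dI m (gcd d e)" using genideal_minimal[OF Ig] by blast
  then have "dI m g' \<subseteq> dI m (gcd d e)" using union_genideal[OF Id] g' by simp
  then show ?thesis using sub1 g' by auto
qed

lemma dI_ess:
  assumes g: "g > 0" "g dvd m"
  shows "essential_ideal R (dI m g) \<longleftrightarrow> essd m g"
proof -
  have idl: "ideal L R \<and> L \<noteq> {\<zero>} \<longleftrightarrow> (\<exists>e>0. e dvd m \<and> e \<noteq> m \<and> L = dI m e)" for L
    using ideal_dI dI_ideal dI_zero_iff by blast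
  have lc: "lcm g e > 0" "lcm g e dvd m" if "e > 0" "e dvd m" for e
    using g that by (auto simp: lcm_pos_int)
  show ?thesis unfolding essential_ideal_def essd_def
  proof (intro iffI conjI allI impI)
    fix e :: int assume H: "ideal (dI m g) R \<and> (\<forall>L. ideal L R \<and> L \<noteq> {\<zero>} \<longrightarrow> dI m g \<inter> L \<noteq> {\<zero>})"
      and e: "e > 0" "e dvd m \<and> e \<noteq> m"
    then have "dI m g \<inter> dI m e \<noteq> {\<zero>}" using idl[of "dI m e"] by blast
    then have "dI m (lcm g e) \<noteq> {\<zero>}" using dI_inter by simp
    then show "lcm g e \<noteq> m" using dI_m res_zero_eq by auto
  next
    show "ideal (dI m g) R" using dI_ideal[OF g] .
  next
    fix L assume H: "\<forall>e>0. e dvd m \<and> e \<noteq> m \<longrightarrow> lcm g e \<noteq> m" and L: "ideal L R \<and> L \<noteq> {\<zero>}"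
    then obtain e where e: "e > 0" "e dvd m" "e \<noteq> m" "L = dI m e" using idl by blast
    then have "lcm g e \<noteq> m" using H by blast
    then show "dI m g \<inter> L \<noteq> {\<zero>}" using e dI_inter dI_zero_iff[OF lc[OF e(1,2)]] by simp
  qed
qed

lemma vertices_eq:
  "eig_vertices R = dI m ` {d. d > 0 \<and> d dvd m \<and> d \<noteq> 1 \<and> d \<noteq> m}"
proof -
  have "ideal I R \<and> I \<noteq> {\<zero>} \<and> I \<noteq> carrier R \<longleftrightarrow> I \<in> dI m ` {d. d > 0 \<and> d dvd m \<and> d \<noteq> 1 \<and> d \<noteq> m}" for I
    using ideal_dI dI_ideal dI_zero_iff dI_carrier_iff by blast
  then show ?thesis unfolding eig_vertices_def by auto
qed

lemma adj_eq:
  assumes d: "d > 0" "d dvd m" and e: "e > 0" "e dvd m"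
  shows "eig_adj R (dI m d) (dI m e) \<longleftrightarrow> d \<noteq> e \<and> essd m (gcd d e)"
  unfolding eig_adj_def using dI_add[OF d e] dI_ess[of "gcd d e"] d e dI_inj[OF d e] by auto

end


lemma card_div_pp:
  assumes p: "prime (p::nat)"
  shows "card {d. d dvd p ^ e} = e + 1"
proof -
  have "{d. d dvd p ^ e} = (\<lambda>i. p ^ i) ` {..e}" using divides_primepow_nat[OF p] by auto
  moreover have "inj_on (\<lambda>i. p ^ i) {..e}" using p prime_gt_1_nat by (auto intro: inj_onI)
  ultimately show ?thesis by (simp add: card_image)
qed

lemma card_div_mult:
  fixes x y :: nat
  assumes c: "coprime x y" and x: "x > 0" and y: "y > 0"
  shows "card {d. d dvd x * y} = card {d. d dvd x} * card {d. d dvd y}"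
proof -
  have "bij_betw (\<lambda>(a,b). a * b) ({d. d dvd x} \<times> {d. d dvd y}) {d. d dvd x * y}"
    unfolding bij_betw_def
  proof
    show "inj_on (\<lambda>(a,b). a * b) ({d. d dvd x} \<times> {d. d dvd y})"
    proof (rule inj_onI)
      fix u v assume u: "u \<in> {d. d dvd x} \<times> {d. d dvd y}" and v: "v \<in> {d. d dvd x} \<times> {d. d dvd y}"
        and uv: "(\<lambda>(a,b). a * b) u = (\<lambda>(a,b). a * b) v"
      obtain a b where ab: "u = (a,b)" by (cases u)
      obtain a' b' where ab': "v = (a',b')" by (cases v)
      have a: "a dvd x" "b dvd y" "a' dvd x" "b' dvd y" using u v ab ab' by auto
      have eq: "a * b = a' * b'" using uv ab ab' by simp
      have cb: "coprime x b" "coprime x b'"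
        using coprime_divisors[OF dvd_refl a(2) c] coprime_divisors[OF dvd_refl a(4) c] by auto
      have ga: "gcd (a * b) x = a"
      proof -
        have "gcd (a * b) x = gcd a x" by (rule gcd_mult_left_right_cancel[OF cb(1)])
        also have "\<dots> = a" using a(1) by (rule gcd_nat.absorb1)
        finally show ?thesis .
      qed
      have ga': "gcd (a' * b') x = a'"
      proof -
        have "gcd (a' * b') x = gcd a' x" by (rule gcd_mult_left_right_cancel[OF cb(2)])
        also have "\<dots> = a'" using a(3) by (rule gcd_nat.absorb1)
        finally show ?thesis .
      qed
      have "a = a'" using ga ga' eq by simp
      moreover have "a > 0" using a x by (auto intro: dvd_pos_nat)
      ultimately have "b = b'" using eq by simp
      then show "u = v" using \<open>a = a'\<close> ab ab' by simp
    qed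
    show "(\<lambda>(a,b). a * b) ` ({d. d dvd x} \<times> {d. d dvd y}) = {d. d dvd x * y}"
    proof
      show "(\<lambda>(a,b). a * b) ` ({d. d dvd x} \<times> {d. d dvd y}) \<subseteq> {d. d dvd x * y}"
        by (clarsimp simp: mult_dvd_mono)
      show "{d. d dvd x * y} \<subseteq> (\<lambda>(a,b). a * b) ` ({d. d dvd x} \<times> {d. d dvd y})"
      proof
        fix d assume "d \<in> {d. d dvd x * y}"
        then obtain a b where "d = a * b" "a dvd x" "b dvd y" using division_decomp by blast
        then show "d \<in> (\<lambda>(a,b). a * b) ` ({d. d dvd x} \<times> {d. d dvd y})"
          by (intro image_eqI[of _ _ "(a,b)"]) simp_all
      qed
    qed
  qed
  then have "card {d. d dvd x * y} = card ({d. d dvd x} \<times> {d. d dvd y})"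
    by (simp add: bij_betw_same_card)
  then show ?thesis by (simp add: card_cartesian_product)
qed

lemma card_divisors_prod:
  fixes p m :: "nat \<Rightarrow> nat"
  assumes "finite A" "inj_on p A" "\<forall>i\<in>A. prime (p i)"
  shows "card {d. d dvd (\<Prod>i\<in>A. p i ^ m i)} = (\<Prod>i\<in>A. m i + 1)"
  using assms
proof (induction A rule: finite_induct)
  case empty then show ?case by simp
next
  case (insert a A)
  have pa: "prime (p a)" using insert by simp
  have pos: "(\<Prod>i\<in>A. p i ^ m i) > 0"
  proof (rule prod_pos)
    fix i assume "i \<in> A" then have "prime (p i)" using insert.prems by simp
    then show "p i ^ m i > 0" using prime_gt_0_nat by simp
  qed
  have nd: "\<not> p a dvd (\<Prod>i\<in>A. p i ^ m i)"
  proof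
    assume H: "p a dvd (\<Prod>i\<in>A. p i ^ m i)"
    have "\<exists>i\<in>A. p a dvd p i ^ m i" using H prime_dvd_prod_iff[OF insert.hyps(1) pa] by simp
    then obtain i where i: "i \<in> A" "p a dvd p i ^ m i" by blast
    have "p a dvd p i" by (rule prime_dvd_power[OF pa i(2)])
    moreover have "prime (p i)" using insert.prems i by simp
    ultimately have "p a = p i" using primes_dvd_imp_eq[OF pa] by simp
    moreover have "inj_on p (insert a A)" using insert.prems by simp
    ultimately have "a = i" using i(1) by (auto dest: inj_onD)
    then show False using insert.hyps(2) i(1) by simp
  qed
  have cop: "coprime (p a ^ m a) (\<Prod>i\<in>A. p i ^ m i)"
    using prime_imp_coprime[OF pa nd] by simp
  have "(\<Prod>i\<in>insert a A. p i ^ m i) = p a ^ m a * (\<Prod>i\<in>A. p i ^ m i)" using insert by simp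
  then have "card {d. d dvd (\<Prod>i\<in>insert a A. p i ^ m i)} = (m a + 1) * card {d. d dvd (\<Prod>i\<in>A. p i ^ m i)}"
    using card_div_mult[OF cop _ pos] card_div_pp[OF pa] pa prime_gt_0_nat by simp
  also have "\<dots> = (\<Prod>i\<in>insert a A. m i + 1)" using insert by (simp add: inj_on_insert)
  finally show ?case .
qed


definition essn :: "nat \<Rightarrow> nat \<Rightarrow> bool" where
  "essn n g \<longleftrightarrow> (\<forall>e>0. e dvd n \<and> e \<noteq> n \<longrightarrow> lcm g e \<noteq> n)"

locale fac =
  fixes n k :: nat and p m :: "nat \<Rightarrow> nat"
  assumes k: "k \<ge> 1"
    and primes: "\<forall>i\<in>{1..k}. prime (p i)"
    and incr: "\<forall>i\<in>{1..k}. \<forall>j\<in>{1..k}. i < j \<longrightarrow> p i < p j"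
    and mpos: "\<forall>i\<in>{1..k}. m i > 0"
    and n: "n = (\<Prod>i\<in>{1..k}. p i ^ m i)"
    and not_prime: "\<not> prime n"
    and not_sq: "\<not> (\<exists>q::nat. prime q \<and> n = q ^ 2)"
begin

definition Dn where "Dn = {d. d dvd n \<and> d \<noteq> 1 \<and> d \<noteq> n}"

lemma pinj: "inj_on p {1..k}"
proof (rule inj_onI)
  fix i j assume "i \<in> {1..k}" "j \<in> {1..k}" "p i = p j"
  show "i = j"
  proof (rule ccontr)
    assume "i \<noteq> j"
    then have "i < j \<or> j < i" by arith
    then have "p i < p j \<or> p j < p i" using incr \<open>i \<in> {1..k}\<close> \<open>j \<in> {1..k}\<close> by blast
    then show False using \<open>p i = p j\<close> by simp
  qed
qed

lemma pdvd: "i \<in> {1..k} \<Longrightarrow> p i ^ m i dvd n"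
  unfolding n by (rule dvd_prodI) simp_all

lemma pdvd1: "i \<in> {1..k} \<Longrightarrow> p i dvd n"
  using pdvd mpos by (meson dvd_power dvd_trans)

lemma n_pos: "n > 0"
proof -
  have "\<forall>i\<in>{1..k}. p i ^ m i > 0" using primes prime_gt_0_nat by simp
  then show ?thesis unfolding n by (simp add: prod_pos)
qed

lemma n_gt1: "n > 1"
proof -
  have "p 1 dvd n" using pdvd1 k by simp
  moreover have "p 1 > 1" using primes k prime_gt_1_nat by simp
  ultimately show ?thesis using n_pos by (meson dvd_imp_le less_le_trans)
qed

lemma card_Dn: "card Dn = (\<Prod>i\<in>{1..k}. m i + 1) - 2"
proof -
  have "card {d. d dvd n} = (\<Prod>i\<in>{1..k}. m i + 1)"
    unfolding n by (rule card_divisors_prod) (use pinj primes in auto)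
  moreover have "Dn = {d. d dvd n} - {1, n}" unfolding Dn_def by auto
  moreover have "{1, n} \<subseteq> {d. d dvd n}" by auto
  moreover have "finite {d. d dvd n}" using n_pos by simp
  moreover have "card {1, n} = 2" using n_gt1 by simp
  ultimately show ?thesis by (simp add: card_Diff_subset)
qed

lemma finite_Dn: "finite Dn"
proof -
  have "Dn \<subseteq> {d. d dvd n}" unfolding Dn_def by blast
  moreover have "finite {d. d dvd n}" using n_pos by (rule finite_divisors_nat)
  ultimately show ?thesis by (rule finite_subset)
qed

lemma Dn_pos: "d \<in> Dn \<Longrightarrow> d > 0"
  unfolding Dn_def using dvd_pos_nat[OF n_pos] by blast

lemma ess1: "essn n 1" unfolding essn_def by simp

lemma Dn_ne: "Dn \<noteq> {}"
proof -
  have pr: "prime (p 1)" using primes k by simp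
  have "p 1 dvd n" using pdvd1[of 1] k by simp
  moreover have "p 1 \<noteq> 1" using pr by auto
  moreover have "p 1 \<noteq> n" using pr not_prime by auto
  ultimately have "p 1 \<in> Dn" unfolding Dn_def by blast
  then show ?thesis by blast
qed

lemma domA:
  assumes i: "i \<in> {1..k}" "m i \<ge> 2"
  shows "\<exists>v\<in>Dn. (\<exists>w\<in>Dn. w \<noteq> v) \<and> (\<forall>u\<in>Dn. u \<noteq> v \<longrightarrow> essn n (gcd v u))"
proof -
  define q where "q = p i"
  have q: "prime q" using primes i unfolding q_def by simp
  have q2: "q ^ 2 dvd n" using pdvd[OF i(1)] i(2) unfolding q_def
    by (meson dvd_trans le_imp_power_dvd)
  have q1: "q dvd n" using pdvd1[OF i(1)] unfolding q_def .
  have qD: "q \<in> Dn" unfolding Dn_def using q q1 not_prime by auto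
  obtain w where w: "n = q * w" using q1 by (auto elim: dvdE)
  have wD: "w \<in> Dn" unfolding Dn_def
  proof (intro CollectI conjI)
    show "w dvd n" using w by simp
    show "w \<noteq> 1" using w not_prime q by auto
    show "w \<noteq> n"
    proof
      assume "w = n"
      then have "q = 1" using w n_pos by auto
      then show False using q by simp
    qed
  qed
  have wq: "w \<noteq> q"
  proof
    assume "w = q"
    then have "n = q ^ 2" using w by (simp add: power2_eq_square)
    then show False using not_sq q by blast
  qed
  have essq: "essn n q" unfolding essn_def
  proof (intro allI impI)
    fix e :: nat assume e: "e > 0" "e dvd n \<and> e \<noteq> n"
    show "lcm q e \<noteq> n"
    proof (cases "q dvd e")
      case True then show ?thesis using e by simp
    next
      case False
      then have "coprime q e" using prime_imp_coprime[OF q] by simp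
      then have l: "lcm q e = q * e" by (simp add: lcm_coprime)
      show ?thesis
      proof
        assume "lcm q e = n"
        then have "q * q dvd q * e" using q2 l by (simp add: power2_eq_square)
        then have "q dvd e" using q prime_gt_0_nat by simp
        then show False using False by simp
      qed
    qed
  qed
  have "\<forall>u\<in>Dn. u \<noteq> q \<longrightarrow> essn n (gcd q u)"
  proof (intro ballI impI)
    fix u assume "u \<in> Dn" "u \<noteq> q"
    show "essn n (gcd q u)"
    proof (cases "q dvd u")
      case True then show ?thesis using essq by simp
    next
      case False
      then have "coprime q u" using prime_imp_coprime[OF q] by simp
      then show ?thesis using ess1 by simp
    qed
  qed
  then show ?thesis using qD wD wq by blast
qed

lemma domB:
  assumes k2: "k = 2" and m12: "m 1 = 1" "m 2 = 1"
  shows "\<exists>v\<in>Dn. (\<exists>w\<in>Dn. w \<noteq> v) \<and> (\<forall>u\<in>Dn. u \<noteq> v \<longrightarrow> essn n (gcd v u))"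
proof -
  have e: "{1..k} = {1, 2::nat}" using k2 by auto
  have nn: "n = p 1 * p 2" unfolding n e using m12 by simp
  have p1: "prime (p 1)" and p2: "prime (p 2)" using primes k2 by auto
  have lt: "p 1 < p 2" using incr k2 by simp
  have g1: "p 1 > 1" "p 2 > 1" using p1 p2 prime_gt_1_nat by auto
  have D1: "p 1 \<in> Dn" unfolding Dn_def using nn g1 by simp
  have D2: "p 2 \<in> Dn" unfolding Dn_def using nn g1 by simp
  have "\<forall>u\<in>Dn. u \<noteq> p 1 \<longrightarrow> essn n (gcd (p 1) u)"
  proof (intro ballI impI)
    fix u assume u: "u \<in> Dn" "u \<noteq> p 1"
    have "\<not> p 1 dvd u"
    proof
      assume "p 1 dvd u"
      then obtain t where t: "u = p 1 * t" by (auto elim: dvdE)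
      have "u dvd n" using u(1) unfolding Dn_def by simp
      then have "p 1 * t dvd p 1 * p 2" using t nn by simp
      then have td: "t dvd p 2" using p1 prime_gt_0_nat by simp
      have "t = 1 \<or> t = p 2" using p2 td unfolding prime_nat_iff by blast
      moreover have "t \<noteq> 1" using t u(2) by auto
      moreover have "t \<noteq> p 2" using t nn u(1) unfolding Dn_def by auto
      ultimately show False by blast
    qed
    then have "coprime (p 1) u" using prime_imp_coprime[OF p1] by simp
    then show "essn n (gcd (p 1) u)" using ess1 by simp
  qed
  moreover have "p 2 \<noteq> p 1" using lt by simp
  ultimately show ?thesis using D1 D2 by blast
qed

end


context fac begin

lemma sqf_n:
  assumes m1: "\<forall>i\<in>{1..k}. m i = 1"
  shows "n = (\<Prod>i\<in>{1..k}. p i)"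
  unfolding n using m1 by (intro prod.cong) auto

lemma prime_is_p:
  assumes m1: "\<forall>i\<in>{1..k}. m i = 1" and r: "prime r" "r dvd n"
  shows "\<exists>j\<in>{1..k}. r = p j"
proof -
  have "r dvd (\<Prod>i\<in>{1..k}. p i)" using r sqf_n[OF m1] by simp
  then have "\<exists>j\<in>{1..k}. r dvd p j" using prime_dvd_prod_iff[OF finite_atLeastAtMost r(1)] by blast
  then obtain j where j: "j \<in> {1..k}" "r dvd p j" by blast
  have "prime (p j)" using primes j by simp
  then have "r = p j" using primes_dvd_imp_eq[OF r(1)] j by simp
  then show ?thesis using j by blast
qed

lemma sqf_nodvd:
  assumes m1: "\<forall>i\<in>{1..k}. m i = 1" and j: "j \<in> {1..k}" and e: "n = p j * e"
  shows "\<not> p j dvd e"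
proof
  assume H: "p j dvd e"
  have "n = p j * (\<Prod>i\<in>{1..k} - {j}. p i)" using sqf_n[OF m1] j by (simp add: prod.remove)
  moreover have "p j > 0" using primes j prime_gt_0_nat by simp
  ultimately have "e = (\<Prod>i\<in>{1..k} - {j}. p i)" using e by simp
  then have "p j dvd (\<Prod>i\<in>{1..k} - {j}. p i)" using H by simp
  moreover have pj: "prime (p j)" using primes j by simp
  ultimately have "\<exists>i\<in>{1..k} - {j}. p j dvd p i" using prime_dvd_prod_iff[OF _ pj, of "{1..k} - {j}" p] by blast
  then obtain i where i: "i \<in> {1..k} - {j}" "p j dvd p i" by blast
  have "prime (p i)" using primes i by simp
  then have "p j = p i" using primes_dvd_imp_eq[OF pj] i by simp
  then have "j = i" using pinj j i by (auto dest: inj_onD)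
  then show False using i by simp
qed

lemma not_essn:
  assumes m1: "\<forall>i\<in>{1..k}. m i = 1" and g: "g dvd n" "g \<noteq> 1"
  shows "\<not> essn n g"
proof
  assume ess: "essn n g"
  obtain r where r: "prime r" "r dvd g" using prime_factor_nat[OF g(2)] by blast
  have rn: "r dvd n" using r g dvd_trans by blast
  obtain j where j: "j \<in> {1..k}" "r = p j" using prime_is_p[OF m1 r(1) rn] by blast
  obtain e where e: "n = r * e" using rn by (auto elim: dvdE)
  have epos: "e > 0" using e n_pos by (cases e) auto
  have ed: "e dvd n" using e by simp
  have en: "e \<noteq> n"
  proof
    assume "e = n" then have "r = 1" using e n_pos by auto
    then show False using r by simp
  qed
  have nr: "\<not> r dvd e" using sqf_nodvd[OF m1 j(1)] e j by simp
  have cop: "coprime r e" using prime_imp_coprime[OF r(1) nr] .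
  have "r dvd lcm g e" using r(2) dvd_trans dvd_lcm1 by blast
  moreover have "e dvd lcm g e" by simp
  ultimately have "r * e dvd lcm g e" using divides_mult cop by blast
  then have "n dvd lcm g e" using e by simp
  moreover have "lcm g e dvd n" using g(1) ed by simp
  ultimately have "lcm g e = n" by (rule dvd_antisym[rotated])
  then show False using ess epos ed en unfolding essn_def by blast
qed

lemma diam:
  assumes m1: "\<forall>i\<in>{1..k}. m i = 1" and k3: "k \<ge> 3"
  shows "\<forall>u\<in>Dn. \<forall>w\<in>Dn. u \<noteq> w \<longrightarrow>
     (\<exists>y\<in>Dn. y \<noteq> u \<and> \<not> essn n (gcd u y) \<and> (w = y \<or> (w \<noteq> y \<and> \<not> essn n (gcd y w))))"
proof (intro ballI impI)
  fix u w assume u: "u \<in> Dn" and w: "w \<in> Dn" and uw: "u \<noteq> w"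
  have ud: "u dvd n" "u \<noteq> 1" "u \<noteq> n" and wd: "w dvd n" "w \<noteq> 1" "w \<noteq> n"
    using u w unfolding Dn_def by auto
  show "\<exists>y\<in>Dn. y \<noteq> u \<and> \<not> essn n (gcd u y) \<and> (w = y \<or> (w \<noteq> y \<and> \<not> essn n (gcd y w)))"
  proof (cases "gcd u w = 1")
    case False
    have "gcd u w dvd n" using ud(1) dvd_trans by blast
    then have "\<not> essn n (gcd u w)" using not_essn[OF m1] False by blast
    then show ?thesis using w uw by (intro bexI[of _ w]) auto
  next
    case True
    obtain r where r: "prime r" "r dvd u" using prime_factor_nat[OF ud(2)] by blast
    obtain q where q: "prime q" "q dvd w" using prime_factor_nat[OF wd(2)] by blast
    have rw: "\<not> r dvd w"
    proof
      assume "r dvd w" then have "r dvd gcd u w" using r by simp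
      then show False using True r(1) by simp
    qed
    have qu: "\<not> q dvd u"
    proof
      assume "q dvd u" then have "q dvd gcd u w" using q by simp
      then show False using True q(1) by simp
    qed
    have rq: "r \<noteq> q" using rw q by auto
    have cop: "coprime r q" using prime_imp_coprime[OF r(1)] primes_dvd_imp_eq[OF r(1) q(1)] rq by blast
    have rn: "r dvd n" using r ud dvd_trans by blast
    have qn: "q dvd n" using q wd dvd_trans by blast
    define y where "y = r * q"
    have yn: "y dvd n" unfolding y_def using divides_mult[OF rn qn cop] .
    have y1: "y \<noteq> 1" unfolding y_def using r(1) by auto
    have yN: "y \<noteq> n"
    proof
      assume yeq: "y = n"
      have inrq: "p i = r \<or> p i = q" if i: "i \<in> {1..k}" for i
      proof -
        have pi: "prime (p i)" using primes i by simp
        have "p i dvd r * q" using pdvd1[OF i] yeq unfolding y_def by simp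
        then have "p i dvd r \<or> p i dvd q" using prime_dvd_mult_iff[OF pi] by simp
        then show ?thesis using primes_dvd_imp_eq[OF pi r(1)] primes_dvd_imp_eq[OF pi q(1)] by blast
      qed
      have "p 1 < p 2" "p 2 < p 3" "p 1 < p 3" using incr k3 by auto
      moreover have "p 1 = r \<or> p 1 = q" "p 2 = r \<or> p 2 = q" "p 3 = r \<or> p 3 = q"
        using inrq k3 by auto
      ultimately show False by auto
    qed
    have yD: "y \<in> Dn" unfolding Dn_def using yn y1 yN by blast
    have yu: "y \<noteq> u" using qu unfolding y_def by auto
    have yw: "y \<noteq> w" using rw unfolding y_def by auto
    have g1: "\<not> essn n (gcd u y)"
    proof (rule not_essn[OF m1])
      show "gcd u y dvd n" using ud(1) dvd_trans by blast
      have "r dvd gcd u y" using r unfolding y_def by simp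
      then show "gcd u y \<noteq> 1" using r(1) by (metis nat_dvd_1_iff_1 not_prime_1)
    qed
    have g2: "\<not> essn n (gcd y w)"
    proof (rule not_essn[OF m1])
      show "gcd y w dvd n" using wd(1) dvd_trans by blast
      have "q dvd gcd y w" using q unfolding y_def by simp
      then show "gcd y w \<noteq> 1" using q(1) by (metis nat_dvd_1_iff_1 not_prime_1)
    qed
    show ?thesis using yD yu yw g1 g2 by blast
  qed
qed

end


theorem mainTheorem15:
  fixes n k :: nat and p m :: "nat \<Rightarrow> nat"
  assumes k: "k \<ge> 1"
    and primes: "\<forall>i\<in>{1..k}. prime (p i)"
    and incr: "\<forall>i\<in>{1..k}. \<forall>j\<in>{1..k}. i < j \<longrightarrow> p i < p j"
    and mpos: "\<forall>i\<in>{1..k}. m i > 0"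
    and n: "n = (\<Prod>i\<in>{1..k}. p i ^ m i)"
    and not_prime: "\<not> prime n"
    and not_sq: "\<not> (\<exists>q::nat. prime q \<and> n = q ^ 2)"
  defines "T \<equiv> (\<Prod>i\<in>{1..k}. real (m i + 1)) - 2"
  shows "lap_max_eig (eig_vertices (residue_ring (int n))) (eig_adj (residue_ring (int n))) \<le> T
    \<and> (lap_max_eig (eig_vertices (residue_ring (int n))) (eig_adj (residue_ring (int n))) = T
       \<longleftrightarrow> ((k = 1 \<and> m 1 > 2)
            \<or> (k = 2 \<and> m 1 = 1 \<and> m 2 = 1)
            \<or> (k \<ge> 2 \<and> (\<exists>i\<in>{1..k}. m i > 1))))"
proof -
  have F: "fac n k p m" unfolding fac_def using k primes incr mpos n not_prime not_sq by blast
  interpret F: fac n k p m by (rule F)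
  have res: "residues (int n)" unfolding residues_def using F.n_gt1 by simp
  define f where "f = (\<lambda>d::nat. dI (int n) (int d))"
  define V where "V = eig_vertices (residue_ring (int n))"
  define E where "E = eig_adj (residue_ring (int n))"
  have essd_int: "essd (int n) (int g) = essn n g" for g
    unfolding essd_def essn_def
  proof
    assume H: "\<forall>e>0. e dvd int n \<and> e \<noteq> int n \<longrightarrow> lcm (int g) e \<noteq> int n"
    show "\<forall>e>0. e dvd n \<and> e \<noteq> n \<longrightarrow> lcm g e \<noteq> n"
    proof (intro allI impI)
      fix e :: nat assume e: "e > 0" "e dvd n \<and> e \<noteq> n"
      then have ie: "int e > 0" "int e dvd int n" "int e \<noteq> int n" by auto
      have "lcm (int g) (int e) \<noteq> int n" using H[rule_format, OF ie(1)] ie(2,3) by blast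
      then show "lcm g e \<noteq> n" by simp
    qed
  next
    assume H: "\<forall>e>0. e dvd n \<and> e \<noteq> n \<longrightarrow> lcm g e \<noteq> n"
    show "\<forall>e>0. e dvd int n \<and> e \<noteq> int n \<longrightarrow> lcm (int g) e \<noteq> int n"
    proof (intro allI impI)
      fix e :: int assume e: "e > 0" "e dvd int n \<and> e \<noteq> int n"
      define e' where "e' = nat e"
      have ee: "e = int e'" using e unfolding e'_def by simp
      have "e' > 0" "e' dvd n" "e' \<noteq> n" using e ee by auto
      then have "lcm g e' \<noteq> n" using H by blast
      then show "lcm (int g) e \<noteq> int n" unfolding ee by simp
    qed
  qed
  have Dint: "{d::int. 0 < d \<and> d dvd int n \<and> d \<noteq> 1 \<and> d \<noteq> int n} = int ` F.Dn"
  proof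
    show "{d::int. 0 < d \<and> d dvd int n \<and> d \<noteq> 1 \<and> d \<noteq> int n} \<subseteq> int ` F.Dn"
    proof
      fix d :: int assume "d \<in> {d::int. 0 < d \<and> d dvd int n \<and> d \<noteq> 1 \<and> d \<noteq> int n}"
      then have d: "0 < d" "d dvd int n" "d \<noteq> 1" "d \<noteq> int n" by auto
      have dd: "d = int (nat d)" using d by simp
      have "nat d dvd n" using d(2) dd by (metis of_nat_dvd_iff)
      moreover have "nat d \<noteq> 1" "nat d \<noteq> n" using d(3,4) dd by auto
      ultimately have "nat d \<in> F.Dn" unfolding F.Dn_def by blast
      then show "d \<in> int ` F.Dn" using dd by blast
    qed
    show "int ` F.Dn \<subseteq> {d::int. 0 < d \<and> d dvd int n \<and> d \<noteq> 1 \<and> d \<noteq> int n}"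
      using F.Dn_pos unfolding F.Dn_def by auto
  qed
  have Vf: "V = f ` F.Dn"
    unfolding V_def residues.vertices_eq[OF res] Dint f_def by (simp add: image_image)
  have Dprops: "0 < int a" "int a dvd int n" if "a \<in> F.Dn" for a
    using that F.Dn_pos unfolding F.Dn_def by auto
  have adj: "E (f a) (f b) \<longleftrightarrow> a \<noteq> b \<and> essn n (gcd a b)" if "a \<in> F.Dn" "b \<in> F.Dn" for a b
    unfolding E_def f_def using residues.adj_eq[OF res Dprops[OF that(1)] Dprops[OF that(2)]] essd_int
    by simp
  have finj: "inj_on f F.Dn"
  proof (rule inj_onI)
    fix a b assume ab: "a \<in> F.Dn" "b \<in> F.Dn" "f a = f b"
    then have "int a = int b" using residues.dI_inj[OF res Dprops[OF ab(1)] Dprops[OF ab(2)]] unfolding f_def by blast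
    then show "a = b" by simp
  qed
  have fin: "finite V" unfolding Vf using F.finite_Dn by simp
  have cardV: "card V = card F.Dn" unfolding Vf using finj by (simp add: card_image)
  have irr: "\<forall>u\<in>V. \<not> E u u" unfolding E_def eig_adj_def by simp
  have sym: "\<forall>u\<in>V. \<forall>w\<in>V. E u w \<longrightarrow> E w u"
    unfolding Vf using adj by (auto simp: gcd.commute)
  have ne: "V \<noteq> {}" unfolding Vf using F.Dn_ne by simp
  have prod2: "(\<Prod>i\<in>{1..k}. m i + 1) \<ge> 2"
  proof -
    have "card F.Dn > 0" using F.finite_Dn F.Dn_ne by (simp add: card_gt_0_iff)
    then show ?thesis using F.card_Dn by simp
  qed
  have TV: "T = real (card V)"
    unfolding T_def cardV F.card_Dn using prod2 by (simp add: of_nat_diff)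
  note LM = lap_max_facts[of V E, OF fin irr sym ne]
  have iff: "mat_eigenvalue V (laplacian V E) (real (card V)) \<longleftrightarrow>
      ((k = 1 \<and> m 1 > 2) \<or> (k = 2 \<and> m 1 = 1 \<and> m 2 = 1) \<or> (k \<ge> 2 \<and> (\<exists>i\<in>{1..k}. m i > 1)))"
    (is "?ev \<longleftrightarrow> ?cond")
  proof
    assume ?cond
    then have "(\<exists>i\<in>{1..k}. m i \<ge> 2) \<or> (k = 2 \<and> m 1 = 1 \<and> m 2 = 1)"
    proof (elim disjE)
      assume "k = 1 \<and> m 1 > 2" then show ?thesis using k by force
    next
      assume "k = 2 \<and> m 1 = 1 \<and> m 2 = 1" then show ?thesis by blast
    next
      assume "k \<ge> 2 \<and> (\<exists>i\<in>{1..k}. m i > 1)"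
      then obtain i where "i \<in> {1..k}" "m i > 1" by blast
      then have "\<exists>i\<in>{1..k}. m i \<ge> 2" by force
      then show ?thesis by blast
    qed
    then have "\<exists>v\<in>F.Dn. (\<exists>w\<in>F.Dn. w \<noteq> v) \<and> (\<forall>u\<in>F.Dn. u \<noteq> v \<longrightarrow> essn n (gcd v u))"
      using F.domA F.domB by blast
    then obtain v w where v: "v \<in> F.Dn" "w \<in> F.Dn" "w \<noteq> v"
      and dom: "\<forall>u\<in>F.Dn. u \<noteq> v \<longrightarrow> essn n (gcd v u)" by blast
    show ?ev
    proof (rule eig_dom[of V E, OF fin irr sym])
      show "f v \<in> V" "f w \<in> V" using v unfolding Vf by auto
      show "f w \<noteq> f v" using v finj by (auto dest: inj_onD)
      show "\<forall>u\<in>V. u \<noteq> f v \<longrightarrow> E (f v) u"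
        unfolding Vf using adj v dom by auto
    qed
  next
    assume ev: ?ev
    show ?cond
    proof (rule ccontr)
      assume nc: "\<not> ?cond"
      have m1: "\<forall>i\<in>{1..k}. m i = 1"
      proof
        fix i assume i: "i \<in> {1..k}"
        show "m i = 1"
        proof (cases "k = 1")
          case True
          then have "i = 1" using i by simp
          have "m 1 \<le> 2" using nc True by auto
          moreover have "m 1 \<noteq> 2"
          proof
            assume "m 1 = 2" then have "n = p 1 ^ 2" using n True by simp
            then show False using not_sq primes True by auto
          qed
          ultimately have "m 1 = 1 \<or> m 1 = 2" using mpos True by force
          then show ?thesis using \<open>m 1 \<noteq> 2\<close> \<open>i = 1\<close> by simp
        next
          case False
          then have "k \<ge> 2" using k by simp
          then have "\<not> (\<exists>i\<in>{1..k}. m i > 1)" using nc by blast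
          then have "\<not> m i > 1" using i by blast
          moreover have "m i > 0" using mpos i by blast
          ultimately show ?thesis by simp
        qed
      qed
      have k3: "k \<ge> 3"
      proof -
        have "k \<noteq> 1"
        proof
          assume "k = 1" then have "n = p 1" using n m1 by simp
          then show False using not_prime primes \<open>k = 1\<close> by simp
        qed
        moreover have "k \<noteq> 2" using nc m1 by auto
        ultimately show ?thesis using k by simp
      qed
      have "\<not> ?ev"
      proof (rule eig_not_full[of V E, OF fin irr sym])
        show "\<forall>u\<in>V. \<forall>w\<in>V. u \<noteq> w \<longrightarrow> (\<exists>y\<in>V. y \<noteq> u \<and> \<not> E u y \<and> (w = y \<or> (w \<noteq> y \<and> \<not> E y w)))"
        proof (intro ballI impI)
          fix u' w' assume u': "u' \<in> V" and w': "w' \<in> V" and uw: "u' \<noteq> w'"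
          obtain u where u: "u \<in> F.Dn" "u' = f u" using u' unfolding Vf by blast
          obtain w where w: "w \<in> F.Dn" "w' = f w" using w' unfolding Vf by blast
          have "u \<noteq> w" using uw u w by blast
          then obtain y where y: "y \<in> F.Dn" "y \<noteq> u" "\<not> essn n (gcd u y)"
              "w = y \<or> (w \<noteq> y \<and> \<not> essn n (gcd y w))"
            using F.diam[OF m1 k3] u w by blast
          have "f y \<in> V" using y unfolding Vf by blast
          moreover have "f y \<noteq> u'" using y u finj by (auto dest: inj_onD)
          moreover have "\<not> E u' (f y)" using adj[OF u(1) y(1)] y u by simp
          moreover have "w' = f y \<or> (w' \<noteq> f y \<and> \<not> E (f y) w')"
          proof (cases "w = y")
            case True then show ?thesis using w by simp
          next
            case False
            then have "\<not> essn n (gcd y w)" using y by simp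
            then have "\<not> E (f y) w'" using adj[OF y(1) w(1)] w by simp
            moreover have "w' \<noteq> f y" using False w y finj by (auto dest: inj_onD)
            ultimately show ?thesis by simp
          qed
          ultimately show "\<exists>y\<in>V. y \<noteq> u' \<and> \<not> E u' y \<and> (w' = y \<or> (w' \<noteq> y \<and> \<not> E y w'))" by blast
        qed
      qed
      then show False using ev by simp
    qed
  qed
  show ?thesis
    using LM iff TV unfolding V_def[symmetric] E_def[symmetric] by simp
qed


end
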